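(* Let $\mathbb{F}$ be a field of characteristic zero, let $J\ge0$ be an integer and $r,i$ integers with $r\ge2$, $1\le i\le r$. Define elements $N^J_{i,j,(r-1)d+j}\in\mathbb{F}[[q]]$ for integers $d\ge J+1$ and $1\le j\le r$ (indexed by the pair $(j,d)$) by the initial conditions $$N^J_{i,j,(r-1)(J+1)+j}=\begin{cases} q^{2(J+1)j-1}+q^{2(J+1)(j-1)} & 1\le j\le i-1,\\ q^{2(J+1)(j-1)} & j=i,\\ 0 & i+1\le j\le r,\end{cases}$$ and, for $d\ge J+1$ and $1\le j\le r$, the recursion $$N^J_{i,j,(r-1)(d+1)+j}=q^{2(d+1)(j-1)}\sum_{m=1}^{r-j+1}N^J_{i,m,(r-1)d+m}+q^{2(d+1)j-1}\sum_{m=1}^{r-j}N^J_{i,m,(r-1)d+m}.$$ Then for every integer $d\ge J+1$, $$\mathrm{HP}^{2J+1}_i=\sum_{j=1}^{r}N^J_{i,j,(r-1)d+j}\,\mathrm{HP}^{2d+1}_{r-j+1}.$$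
   Context: For $k\ge1$ let $S_k=\mathbb{F}[x_k,x_{k+1},x_{k+2},\ldots]$, graded by weight: the monomial $x_{i_1}^{\alpha_1}\cdots x_{i_m}^{\alpha_m}$ has weight $\sum_t i_t\alpha_t$. Fix $r\ge2$. For $k\ge1$, let $L_k$ be the ideal of $S_k$ generated by the monomials $x_{2a-1}^2$ ($2a-1\ge k$), $x_{2b-1}x_{2b}^{r-1}$ ($2b-1\ge k$), $x_{2c}^{r-n_1}x_{2c+2}^{n_1}$ ($2c\ge k$, $0\le n_1\le r-1$), and $x_{2c}^{r-n_2-1}x_{2c+1}x_{2c+2}^{n_2}$ ($2c\ge k$, $0\le n_2\le r-2$), where $a,b,c$ range over integers. For $1\le \ell\le r$ define the ideal $L_k^{\ell}$ of $S_k$ as follows: if $k$ is even, $L_k^\ell$ is generated by $x_k^{\ell}$, the monomials $x_k^{\ell-t}x_{k+2}^{r-\ell+t}$ and $x_k^{\ell-t}x_{k+1}x_{k+2}^{r-\ell+t-1}$ for $t=1,\ldots,\ell-1$, and the generators of $L_{k+1}$; if $k$ is odd, $L_k^\ell$ is generated by $x_k^2$, $x_kx_{k+1}^{\ell-1}$, and the generators of $L_{k+1}^{\ell}$. For a graded algebra $A=\bigoplus_{j\ge0}A_j$ with finite-dimensional components, its Hilbert–Poincaré series is $\sum_{j\ge0}\dim_{\mathbb{F}}(A_j)q^j$. Write $\mathrm{HP}^k_\ell$ for the Hilbert–Poincaré series of $S_k/L_k^\ell$ (a formal power series in $q$). *)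

theory Defs
  imports "HOL-Library.Poly_Mapping" "HOL-Computational_Algebra.Formal_Power_Series"
begin

text \<open>Monomials in the variables x_1, x_2, ... are exponent vectors (finitely supported
  maps from variable index to exponent); polynomials over the field are finitely supported
  maps from monomials to coefficients, with the convolution product of Poly_Mapping.\<close>

type_synonym mono = "nat \<Rightarrow>\<^sub>0 nat"
type_synonym 'a mpoly = "mono \<Rightarrow>\<^sub>0 'a"

definition weight :: "mono \<Rightarrow> nat" where
  "weight m = (\<Sum>i\<in>Poly_Mapping.keys m. i * Poly_Mapping.lookup m i)"

definition monom :: "mono \<Rightarrow> 'a::semiring_1 mpoly" where
  "monom m = Poly_Mapping.single m 1"

abbreviation xp :: "nat \<Rightarrow> nat \<Rightarrow> mono" where
  "xp i e \<equiv> Poly_Mapping.single i e"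

definition Spoly :: "nat \<Rightarrow> 'a::semiring_1 mpoly set" where
  "Spoly k = {p. \<forall>m\<in>Poly_Mapping.keys p. \<forall>v\<in>Poly_Mapping.keys m. k \<le> v}"

inductive_set gen_ideal :: "nat \<Rightarrow> mono set \<Rightarrow> 'a::semiring_1 mpoly set"
  for k :: nat and G :: "mono set" where
  zero: "0 \<in> gen_ideal k G"
| step: "g \<in> G \<Longrightarrow> q \<in> Spoly k \<Longrightarrow> p \<in> gen_ideal k G \<Longrightarrow> monom g * q + p \<in> gen_ideal k G"

text \<open>Generators of L_k (exponent vectors of the generating monomials).
  Odd indices 2a-1 / 2b-1 are the odd v, even indices 2c are the even v (v \<ge> k \<ge> 1).\<close>
definition Lgens :: "nat \<Rightarrow> nat \<Rightarrow> mono set" where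
  "Lgens r k =
     {xp v 2 | v. odd v \<and> k \<le> v}
   \<union> {xp v 1 + xp (v+1) (r-1) | v. odd v \<and> k \<le> v}
   \<union> {xp v (r-n1) + xp (v+2) n1 | v n1. even v \<and> k \<le> v \<and> n1 \<le> r-1}
   \<union> {xp v (r-n2-1) + xp (v+1) 1 + xp (v+2) n2 | v n2. even v \<and> k \<le> v \<and> n2 \<le> r-2}"

definition Lgens_even :: "nat \<Rightarrow> nat \<Rightarrow> nat \<Rightarrow> mono set" where
  "Lgens_even r l k =
     {xp k l}
   \<union> {xp k (l-t) + xp (k+2) (r-l+t) | t. 1 \<le> t \<and> t \<le> l-1}
   \<union> {xp k (l-t) + xp (k+1) 1 + xp (k+2) (r-l+t-1) | t. 1 \<le> t \<and> t \<le> l-1}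
   \<union> Lgens r (k+1)"

definition Lgens_l :: "nat \<Rightarrow> nat \<Rightarrow> nat \<Rightarrow> mono set" where
  "Lgens_l r l k =
     (if even k then Lgens_even r l k
      else {xp k 2, xp k 1 + xp (k+1) (l-1)} \<union> Lgens_even r l (k+1))"

definition comp :: "nat \<Rightarrow> nat \<Rightarrow> 'a::semiring_1 mpoly set" where
  "comp k j = {p \<in> Spoly k. \<forall>m\<in>Poly_Mapping.keys p. weight m = j}"

text \<open>B is linearly independent modulo the subspace W (scalars act as constant polynomials).\<close>
definition indep_mod :: "'a::field mpoly set \<Rightarrow> 'a mpoly set \<Rightarrow> bool" where
  "indep_mod W B \<longleftrightarrow> (\<forall>c. (\<Sum>b\<in>B. Poly_Mapping.single 0 (c b) * b) \<in> W \<longrightarrow> (\<forall>b\<in>B. c b = 0))"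

text \<open>Dimension of the image of V in the quotient by W, i.e. dim (V + W)/W:
  the maximal size of a finite subset of V that is linearly independent modulo W.\<close>
definition quot_dim :: "'a::field mpoly set \<Rightarrow> 'a mpoly set \<Rightarrow> nat" where
  "quot_dim V W = (GREATEST n. \<exists>B. B \<subseteq> V \<and> finite B \<and> card B = n \<and> indep_mod W B)"

text \<open>Hilbert-Poincare series of S_k / L_k^l (parameter r): coefficient of q^j is
  dim of the weight-j component of the quotient.\<close>
definition HP :: "nat \<Rightarrow> nat \<Rightarrow> nat \<Rightarrow> 'a::field fps" where
  "HP r k l = Abs_fps (\<lambda>j. of_nat (quot_dim (comp k j :: 'a mpoly set) (gen_ideal k (Lgens_l r l k))))"

text \<open>N^J_{i,j,(r-1)d+j}, indexed by (j,d); only meaningful for d \<ge> J+1.\<close>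
fun Ncoef :: "nat \<Rightarrow> nat \<Rightarrow> nat \<Rightarrow> nat \<Rightarrow> nat \<Rightarrow> 'a::field fps" where
  "Ncoef r J i d j =
    (if d \<le> J + 1 then
       (if 1 \<le> j \<and> j \<le> i - 1 then fps_X ^ (2*(J+1)*j - 1) + fps_X ^ (2*(J+1)*(j-1))
        else if j = i then fps_X ^ (2*(J+1)*(j-1))
        else 0)
     else
       fps_X ^ (2*d*(j-1)) * (\<Sum>m=1..r-j+1. Ncoef r J i (d-1) m)
       + fps_X ^ (2*d*j - 1) * (\<Sum>m=1..r-j. Ncoef r J i (d-1) m))"

declare Ncoef.simps[simp del]

end

theory Submission
  imports Defs
begin



lemma dep_exists:
  fixes v :: "'b \<Rightarrow> 'c \<Rightarrow> 'a::field"
  assumes "finite S" "finite B" "card S < card B"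
  shows "\<exists>c. (\<exists>b\<in>B. c b \<noteq> 0) \<and> (\<forall>s\<in>S. (\<Sum>b\<in>B. c b * v b s) = 0)"
  using assms
proof (induction S arbitrary: B v rule: finite_induct)
  case empty
  then have "B \<noteq> {}" by auto
  then obtain b where "b \<in> B" by blast
  then show ?case by (rule_tac x="\<lambda>_. 1" in exI) auto
next
  case (insert s S)
  have cB: "card B = Suc (card S) + (card B - Suc (card S))" using insert by simp
  show ?case
  proof (cases "\<forall>b\<in>B. v b s = 0")
    case True
    from insert have "B \<noteq> {}" by auto
    then obtain b1 where b1: "b1 \<in> B" by blast
    let ?B = "B - {b1}"
    have "card S < card ?B" using insert b1 by simp
    then obtain c where c: "\<exists>b\<in>?B. c b \<noteq> 0" "\<forall>t\<in>S. (\<Sum>b\<in>?B. c b * v b t) = 0"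
      using insert by blast
    define c' where "c' = c(b1 := 0)"
    have eq: "(\<Sum>b\<in>B. c' b * v b t) = (\<Sum>b\<in>?B. c b * v b t)" for t
      using b1 insert(4) by (simp add: c'_def sum.remove)
    have "\<forall>t\<in>insert s S. (\<Sum>b\<in>B. c' b * v b t) = 0"
      using c True by (auto simp: eq)
    moreover have "\<exists>b\<in>B. c' b \<noteq> 0" using c(1) by (auto simp: c'_def)
    ultimately show ?thesis by blast
  next
    case False
    then obtain b0 where b0: "b0 \<in> B" "v b0 s \<noteq> 0" by auto
    let ?B = "B - {b0}"
    define w where "w b t = v b t - v b s / v b0 s * v b0 t" for b t
    have "card S < card ?B" using insert b0 by simp
    then obtain c where c: "\<exists>b\<in>?B. c b \<noteq> 0" "\<forall>t\<in>S. (\<Sum>b\<in>?B. c b * w b t) = 0"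
      using insert by blast
    define lam where "lam = - (\<Sum>b\<in>?B. c b * v b s) / v b0 s"
    define c' where "c' = c(b0 := lam)"
    have eq: "(\<Sum>b\<in>B. c' b * v b t) = lam * v b0 t + (\<Sum>b\<in>?B. c b * v b t)" for t
      using b0 insert(4) by (simp add: c'_def sum.remove)
    have ws: "(\<Sum>b\<in>?B. c b * w b t) = (\<Sum>b\<in>?B. c b * v b t) + lam * v b0 t" for t
    proof -
      have "(\<Sum>b\<in>?B. c b * w b t) = (\<Sum>b\<in>?B. c b * v b t - (c b * v b s) * (v b0 t / v b0 s))"
        by (rule sum.cong) (simp_all add: w_def algebra_simps)
      also have "\<dots> = (\<Sum>b\<in>?B. c b * v b t) - (\<Sum>b\<in>?B. c b * v b s) * (v b0 t / v b0 s)"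
        by (simp add: sum_subtractf sum_distrib_right sum_divide_distrib)
      also have "\<dots> = (\<Sum>b\<in>?B. c b * v b t) + lam * v b0 t"
        by (simp add: lam_def)
      finally show ?thesis .
    qed
    have "\<forall>t\<in>insert s S. (\<Sum>b\<in>B. c' b * v b t) = 0"
    proof
      fix t assume "t \<in> insert s S"
      then show "(\<Sum>b\<in>B. c' b * v b t) = 0"
      proof
        assume "t = s" then show ?thesis using b0(2) by (simp add: eq lam_def)
      next
        assume "t \<in> S" then show ?thesis using c(2) ws[of t] eq[of t] by (simp add: algebra_simps)
      qed
    qed
    moreover have "\<exists>b\<in>B. c' b \<noteq> 0" using c(1) by (auto simp: c'_def)
    ultimately show ?thesis by blast
  qed
qed



definition dvdm :: "mono \<Rightarrow> mono \<Rightarrow> bool" where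
  "dvdm g m \<longleftrightarrow> (\<forall>i. Poly_Mapping.lookup g i \<le> Poly_Mapping.lookup m i)"

definition stdset :: "nat \<Rightarrow> mono set \<Rightarrow> nat \<Rightarrow> mono set" where
  "stdset k G n = {m. (\<forall>v\<in>Poly_Mapping.keys m. k \<le> v) \<and> weight m = n \<and> \<not>(\<exists>g\<in>G. dvdm g m)}"

lemma lookup_scal: "Poly_Mapping.lookup (Poly_Mapping.single 0 c * p) m = c * Poly_Mapping.lookup p m"
  by (simp add: mult_map_scale_conv_mult[symmetric] map.rep_eq when_def)

lemma ideal_keys:
  assumes "p \<in> gen_ideal k G"
  shows "\<forall>m\<in>Poly_Mapping.keys p. \<exists>g\<in>G. dvdm g m"
  using assms
proof induction
  case zero then show ?case by simp
next
  case (step g q p)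
  have "Poly_Mapping.keys (monom g * q) \<subseteq> {a + b |a b. a \<in> Poly_Mapping.keys (monom g :: 'a mpoly) \<and> b \<in> Poly_Mapping.keys q}"
    by (rule keys_mult)
  also have "\<dots> \<subseteq> {g + b |b. True}" by (auto simp: monom_def)
  finally have "\<forall>m\<in>Poly_Mapping.keys (monom g * q). dvdm g m" by (auto simp: dvdm_def lookup_add)
  then show ?case using step keys_add[of "monom g * q" p] by blast
qed

lemma ideal_in:
  assumes "p \<in> Spoly k" "\<forall>m\<in>Poly_Mapping.keys p. \<exists>g\<in>G. dvdm g m"
  shows "(p::'a::comm_ring_1 mpoly) \<in> gen_ideal k G"
proof -
  have "\<And>p. card (Poly_Mapping.keys p) = N \<Longrightarrow> (p::'a mpoly) \<in> Spoly k \<Longrightarrow> \<forall>m\<in>Poly_Mapping.keys p. \<exists>g\<in>G. dvdm g m \<Longrightarrow> p \<in> gen_ideal k G" for N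
  proof (induction N)
    case 0
    then have "p = 0" by simp
    then show ?case by (simp add: gen_ideal.zero)
  next
    case (Suc N)
    then have "Poly_Mapping.keys p \<noteq> {}" by auto
    then obtain m where m: "m \<in> Poly_Mapping.keys p" by blast
    with Suc obtain g where g: "g \<in> G" "dvdm g m" by blast
    define c where "c = Poly_Mapping.lookup p m"
    define p' where "p' = p - Poly_Mapping.single m c"
    have lp': "Poly_Mapping.lookup p' x = (if x = m then 0 else Poly_Mapping.lookup p x)" for x
      by (simp add: p'_def lookup_minus lookup_single c_def when_def)
    have kp': "Poly_Mapping.keys p' = Poly_Mapping.keys p - {m}" by (auto simp: in_keys_iff lp' split: if_splits)
    have "card (Poly_Mapping.keys p') = N" using Suc.prems m by (simp add: kp')
    moreover have "p' \<in> Spoly k" using Suc.prems(2) by (auto simp: Spoly_def kp')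
    moreover have "\<forall>m\<in>Poly_Mapping.keys p'. \<exists>g\<in>G. dvdm g m" using Suc.prems(3) by (auto simp: kp')
    ultimately have ip': "p' \<in> gen_ideal k G" using Suc.IH by blast
    have gm: "g + (m - g) = m" using g(2)
      by (intro poly_mapping_eqI) (simp add: lookup_add lookup_minus dvdm_def)
    have "Poly_Mapping.single (m - g) c \<in> Spoly k"
      using Suc.prems(2) m
      by (auto simp: Spoly_def in_keys_iff lookup_single when_def lookup_minus split: if_splits)
    from gen_ideal.step[OF g(1) this ip']
    have "monom g * Poly_Mapping.single (m - g) c + p' \<in> gen_ideal k G" .
    moreover have "monom g * Poly_Mapping.single (m - g) c + p' = p"
      by (simp add: monom_def mult_single gm p'_def)
    ultimately show ?case by simp
  qed
  then show ?thesis using assms by blast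
qed

lemma finite_wt:
  assumes "k \<ge> 1"
  shows "finite {m :: mono. (\<forall>v\<in>Poly_Mapping.keys m. k \<le> v) \<and> weight m = n}" (is "finite ?M")
proof -
  let ?F = "{f :: nat \<Rightarrow> nat. \<forall>x. (x \<in> {..n} \<longrightarrow> f x \<in> {..n}) \<and> (x \<notin> {..n} \<longrightarrow> f x = 0)}"
  have fF: "finite ?F" by (rule finite_set_of_finite_funs[OF finite_atMost finite_atMost])
  have key: "\<forall>x. (x \<in> {..n} \<longrightarrow> Poly_Mapping.lookup m x \<in> {..n}) \<and> (x \<notin> {..n} \<longrightarrow> Poly_Mapping.lookup m x = 0)" if mM: "m \<in> ?M" for m
  proof (intro allI)
    fix x
    have m: "\<forall>v\<in>Poly_Mapping.keys m. k \<le> v" "weight m = n" using mM by auto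
    have le: "i * Poly_Mapping.lookup m i \<le> n" if "i \<in> Poly_Mapping.keys m" for i
          proof -
      have "weight m = i * Poly_Mapping.lookup m i + (\<Sum>j\<in>Poly_Mapping.keys m - {i}. j * Poly_Mapping.lookup m j)"
        unfolding weight_def using that by (simp add: sum.remove)
      then show ?thesis using m(2) by linarith
    qed
    show "(x \<in> {..n} \<longrightarrow> Poly_Mapping.lookup m x \<in> {..n}) \<and> (x \<notin> {..n} \<longrightarrow> Poly_Mapping.lookup m x = 0)"
    proof (cases "x \<in> Poly_Mapping.keys m")
      case True
      then have "k \<le> x" using m(1) by blast
      then have "x \<ge> 1" using assms by linarith
      moreover have "Poly_Mapping.lookup m x \<ge> 1" using True by (simp add: in_keys_iff)
      moreover have "x * Poly_Mapping.lookup m x \<le> n" using le[OF True] .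
      ultimately have "x \<le> n" "Poly_Mapping.lookup m x \<le> n"
        using mult_le_mono2[of 1 "Poly_Mapping.lookup m x" x] mult_le_mono1[of 1 x "Poly_Mapping.lookup m x"] by linarith+
      then show ?thesis by simp
    next
      case False then show ?thesis by (simp add: in_keys_iff)
    qed
  qed
  have "Poly_Mapping.lookup ` ?M \<subseteq> ?F"
  proof (rule image_subsetI)
    fix m assume "m \<in> ?M"
    from key[OF this] show "Poly_Mapping.lookup m \<in> ?F" unfolding mem_Collect_eq .
  qed
  then have "finite (Poly_Mapping.lookup ` ?M)" by (rule finite_subset) (rule fF)
  moreover have "inj_on Poly_Mapping.lookup ?M" proof (rule inj_onI)
    fix x y assume "x \<in> ?M" "y \<in> ?M" "Poly_Mapping.lookup x = Poly_Mapping.lookup y"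
    then show "x = y" by (intro poly_mapping_eqI) simp
  qed
  ultimately show ?thesis by (rule finite_imageD)
qed

lemma quot_dim_std:
  assumes "k \<ge> 1"
  shows "quot_dim (comp k n :: 'a::field mpoly set) (gen_ideal k G) = card (stdset k G n)"
proof -
  let ?S = "stdset k G n"
  let ?W = "gen_ideal k G :: 'a mpoly set"
  have fS: "finite ?S" using finite_wt[OF assms, of n] by (rule finite_subset[rotated]) (auto simp: stdset_def)
  let ?B = "(monom :: mono \<Rightarrow> 'a mpoly) ` ?S"
  have injm: "inj (monom :: mono \<Rightarrow> 'a mpoly)"
    proof (rule injI)
    fix x y assume "(monom x :: 'a mpoly) = monom y"
    then have "Poly_Mapping.lookup (monom x :: 'a mpoly) x = Poly_Mapping.lookup (monom y :: 'a mpoly) x" by simp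
    then show "x = y" by (simp add: monom_def lookup_single when_def split: if_splits)
  qed
  have P1: "?B \<subseteq> comp k n \<and> finite ?B \<and> card ?B = card ?S \<and> indep_mod ?W ?B"
  proof (intro conjI)
    show "?B \<subseteq> comp k n" by (auto simp: comp_def Spoly_def monom_def stdset_def)
    show "finite ?B" using fS by simp
    show "card ?B = card ?S" using injm by (simp add: card_image inj_on_subset)
    show "indep_mod ?W ?B" unfolding indep_mod_def
    proof (intro allI impI ballI)
      fix c b assume H: "(\<Sum>b\<in>?B. Poly_Mapping.single 0 (c b) * b) \<in> ?W" and b: "b \<in> ?B"
      then obtain s where s: "s \<in> ?S" "b = monom s" by auto
      have "Poly_Mapping.lookup (\<Sum>b\<in>?B. Poly_Mapping.single 0 (c b) * b) s = (\<Sum>b\<in>?B. c b * Poly_Mapping.lookup b s)"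
        by (simp add: lookup_sum lookup_scal)
      also have "\<dots> = (\<Sum>b\<in>?B. if b = monom s then c b else 0)"
        by (rule sum.cong) (auto simp: monom_def lookup_single when_def split: if_splits)
      also have "\<dots> = c b" using s fS by simp
      finally have eq: "Poly_Mapping.lookup (\<Sum>b\<in>?B. Poly_Mapping.single 0 (c b) * b) s = c b" .
      show "c b = 0"
      proof (rule ccontr)
        assume "c b \<noteq> 0"
        then have "s \<in> Poly_Mapping.keys (\<Sum>b\<in>?B. Poly_Mapping.single 0 (c b) * b)" by (simp add: in_keys_iff eq)
        then show False using ideal_keys[OF H] s(1) by (auto simp: stdset_def)
      qed
    qed
  qed
  have P2: "card B \<le> card ?S" if B: "B \<subseteq> comp k n" "finite B" "indep_mod ?W B" for B
  proof (rule ccontr)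
    assume "\<not> card B \<le> card ?S"
    then have "card ?S < card B" by simp
    from dep_exists[OF fS B(2) this, of "\<lambda>b s. Poly_Mapping.lookup b s"]
    obtain c where c: "\<exists>b\<in>B. c b \<noteq> 0" "\<forall>s\<in>?S. (\<Sum>b\<in>B. c b * Poly_Mapping.lookup b s) = 0" by blast
    let ?p = "\<Sum>b\<in>B. Poly_Mapping.single 0 (c b) * b"
    have lp: "Poly_Mapping.lookup ?p m = (\<Sum>b\<in>B. c b * Poly_Mapping.lookup b m)" for m by (simp add: lookup_sum lookup_scal)
    have km: "\<exists>b\<in>B. m \<in> Poly_Mapping.keys b" if "m \<in> Poly_Mapping.keys ?p" for m
    proof (rule ccontr)
      assume "\<not> (\<exists>b\<in>B. m \<in> Poly_Mapping.keys b)"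
      then have "Poly_Mapping.lookup ?p m = 0" by (simp add: lp in_keys_iff)
      then show False using that by (simp add: in_keys_iff)
    qed
    have "?p \<in> Spoly k" using B(1) km by (fastforce simp: Spoly_def comp_def)
    moreover have "\<forall>m\<in>Poly_Mapping.keys ?p. \<exists>g\<in>G. dvdm g m"
    proof
      fix m assume m: "m \<in> Poly_Mapping.keys ?p"
      obtain b where "b \<in> B" "m \<in> Poly_Mapping.keys b" using km[OF m] by blast
      then have "(\<forall>v\<in>Poly_Mapping.keys m. k \<le> v) \<and> weight m = n" using B(1) by (auto simp: comp_def Spoly_def)
      moreover have "m \<notin> ?S" using m c(2) by (auto simp: in_keys_iff lp)
      ultimately show "\<exists>g\<in>G. dvdm g m" by (auto simp: stdset_def)
    qed
    ultimately have "?p \<in> ?W" by (rule ideal_in)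
    then have "\<forall>b\<in>B. c b = 0" using B(3) unfolding indep_mod_def by blast
    then show False using c(1) by blast
  qed
  show ?thesis unfolding quot_dim_def
    by (rule Greatest_equality) (use P1 P2 in blast)+
qed




definition condv :: "nat \<Rightarrow> nat \<Rightarrow> (nat \<Rightarrow> nat) \<Rightarrow> bool" where
  "condv r v f = (if odd v then f v \<le> 1 \<and> (1 \<le> f v \<longrightarrow> f (v+1) + 2 \<le> r)
     else (1 \<le> f v \<longrightarrow> f v + f (v+2) < r) \<and> (1 \<le> f v \<and> 1 \<le> f (v+1) \<longrightarrow> f v + f (v+2) + 1 < r))"

definition PL :: "nat \<Rightarrow> nat \<Rightarrow> (nat \<Rightarrow> nat) \<Rightarrow> bool" where
  "PL r k f = (\<forall>v\<ge>k. condv r v f)"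

definition stdO :: "nat \<Rightarrow> nat \<Rightarrow> nat \<Rightarrow> (nat \<Rightarrow> nat) \<Rightarrow> bool" where
  "stdO r l k f = (f k \<le> 1 \<and> (1 \<le> f k \<longrightarrow> f (k+1) + 2 \<le> l) \<and> f (k+1) < l \<and> PL r (k+1) f)"

lemma lk_single: "Poly_Mapping.lookup (Poly_Mapping.single a e) i = (if i = a then e else 0)"
  by (simp add: lookup_single when_def)

lemma dvdm1: "dvdm (xp a e) m \<longleftrightarrow> e \<le> Poly_Mapping.lookup m a"
  unfolding dvdm_def lk_single by (auto dest: spec[of _ a])

lemma dvdm2: "a \<noteq> b \<Longrightarrow> dvdm (xp a e + xp b e') m \<longleftrightarrow> e \<le> Poly_Mapping.lookup m a \<and> e' \<le> Poly_Mapping.lookup m b"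
  unfolding dvdm_def lookup_add lk_single
  apply (rule iffI)
  subgoal by (auto dest: spec[of _ a] spec[of _ b])
  subgoal by auto
  done

lemma dvdm3: "a \<noteq> b \<Longrightarrow> a \<noteq> c \<Longrightarrow> b \<noteq> c \<Longrightarrow> dvdm (xp a e + xp b e' + xp c e'') m \<longleftrightarrow>
   e \<le> Poly_Mapping.lookup m a \<and> e' \<le> Poly_Mapping.lookup m b \<and> e'' \<le> Poly_Mapping.lookup m c"
  unfolding dvdm_def lookup_add lk_single
  apply (rule iffI)
   apply (intro conjI)
  subgoal by (auto dest: spec[of _ a])
  subgoal by (auto dest: spec[of _ b])
  subgoal by (auto dest: spec[of _ c])
  apply (intro allI)
  subgoal for i by (cases "i = a"; cases "i = b"; cases "i = c") auto
  done

lemma odd_viol: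
  assumes "odd v" "r \<ge> 2"
  shows "\<not> condv r v f \<longleftrightarrow> 2 \<le> f v \<or> (1 \<le> f v \<and> r - 1 \<le> f (v+1))"
  using assms unfolding condv_def by auto

lemma even_viol:
  assumes "even v" "r \<ge> 2"
  shows "\<not> condv r v f \<longleftrightarrow> (\<exists>n1. n1 \<le> r-1 \<and> r - n1 \<le> f v \<and> n1 \<le> f (v+2))
       \<or> (\<exists>n2. n2 \<le> r-2 \<and> r - n2 - 1 \<le> f v \<and> 1 \<le> f (v+1) \<and> n2 \<le> f (v+2))"
proof
  assume "\<not> condv r v f"
  then have "(1 \<le> f v \<and> r \<le> f v + f (v+2)) \<or> (1 \<le> f v \<and> 1 \<le> f (v+1) \<and> r \<le> f v + f (v+2) + 1)"
    using assms unfolding condv_def by auto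
  then show "(\<exists>n1. n1 \<le> r-1 \<and> r - n1 \<le> f v \<and> n1 \<le> f (v+2))
       \<or> (\<exists>n2. n2 \<le> r-2 \<and> r - n2 - 1 \<le> f v \<and> 1 \<le> f (v+1) \<and> n2 \<le> f (v+2))"
  proof
    assume h: "1 \<le> f v \<and> r \<le> f v + f (v+2)"
    show ?thesis
      by (rule disjI1, rule exI[of _ "min (f (v+2)) (r-1)"]) (use h in auto)
  next
    assume h: "1 \<le> f v \<and> 1 \<le> f (v+1) \<and> r \<le> f v + f (v+2) + 1"
    show ?thesis
      by (rule disjI2, rule exI[of _ "min (f (v+2)) (r-2)"]) (use h in auto)
  qed
next
  assume "(\<exists>n1. n1 \<le> r-1 \<and> r - n1 \<le> f v \<and> n1 \<le> f (v+2))
       \<or> (\<exists>n2. n2 \<le> r-2 \<and> r - n2 - 1 \<le> f v \<and> 1 \<le> f (v+1) \<and> n2 \<le> f (v+2))"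
  then show "\<not> condv r v f" using assms unfolding condv_def by auto
qed

lemma Lgens_char:
  assumes "r \<ge> 2"
  shows "(\<exists>g\<in>Lgens r k. dvdm g m) \<longleftrightarrow> (\<exists>v\<ge>k. \<not> condv r v (Poly_Mapping.lookup m))"
proof -
  let ?f = "Poly_Mapping.lookup m"
  have "(\<exists>g\<in>Lgens r k. dvdm g m) \<longleftrightarrow>
     (\<exists>v. odd v \<and> k \<le> v \<and> 2 \<le> ?f v)
   \<or> (\<exists>v. odd v \<and> k \<le> v \<and> 1 \<le> ?f v \<and> r - 1 \<le> ?f (v+1))
   \<or> (\<exists>v n1. even v \<and> k \<le> v \<and> n1 \<le> r-1 \<and> r - n1 \<le> ?f v \<and> n1 \<le> ?f (v+2))
   \<or> (\<exists>v n2. even v \<and> k \<le> v \<and> n2 \<le> r-2 \<and> r - n2 - 1 \<le> ?f v \<and> 1 \<le> ?f (v+1) \<and> n2 \<le> ?f (v+2))"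
  proof -
    have e1: "(\<exists>g\<in>{xp v 2 | v. odd v \<and> k \<le> v}. dvdm g m) \<longleftrightarrow> (\<exists>v. odd v \<and> k \<le> v \<and> dvdm (xp v 2) m)"
      by blast
    have e2: "(\<exists>g\<in>{xp v 1 + xp (v+1) (r-1) | v. odd v \<and> k \<le> v}. dvdm g m) \<longleftrightarrow> (\<exists>v. odd v \<and> k \<le> v \<and> dvdm (xp v 1 + xp (v+1) (r-1)) m)"
      by blast
    have e3: "(\<exists>g\<in>{xp v (r-n1) + xp (v+2) n1 | v n1. even v \<and> k \<le> v \<and> n1 \<le> r-1}. dvdm g m) \<longleftrightarrow> (\<exists>v n1. even v \<and> k \<le> v \<and> n1 \<le> r-1 \<and> dvdm (xp v (r-n1) + xp (v+2) n1) m)"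
      by blast
    have e4: "(\<exists>g\<in>{xp v (r-n2-1) + xp (v+1) 1 + xp (v+2) n2 | v n2. even v \<and> k \<le> v \<and> n2 \<le> r-2}. dvdm g m) \<longleftrightarrow> (\<exists>v n2. even v \<and> k \<le> v \<and> n2 \<le> r-2 \<and> dvdm (xp v (r-n2-1) + xp (v+1) 1 + xp (v+2) n2) m)"
      by blast
    show ?thesis unfolding Lgens_def bex_Un e1 e2 e3 e4 by (simp add: dvdm1 dvdm2 dvdm3 conj_ac)
  qed
  also have "\<dots> \<longleftrightarrow> (\<exists>v\<ge>k. \<not> condv r v ?f)"
  proof
    assume "(\<exists>v. odd v \<and> k \<le> v \<and> 2 \<le> ?f v)
   \<or> (\<exists>v. odd v \<and> k \<le> v \<and> 1 \<le> ?f v \<and> r - 1 \<le> ?f (v+1))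
   \<or> (\<exists>v n1. even v \<and> k \<le> v \<and> n1 \<le> r-1 \<and> r - n1 \<le> ?f v \<and> n1 \<le> ?f (v+2))
   \<or> (\<exists>v n2. even v \<and> k \<le> v \<and> n2 \<le> r-2 \<and> r - n2 - 1 \<le> ?f v \<and> 1 \<le> ?f (v+1) \<and> n2 \<le> ?f (v+2))"
    then show "\<exists>v\<ge>k. \<not> condv r v ?f"
    proof (elim disjE exE conjE)
      fix v assume "odd v" "k \<le> v" "2 \<le> ?f v"
      then show ?thesis using odd_viol[OF \<open>odd v\<close> assms, of ?f] by auto
    next
      fix v assume "odd v" "k \<le> v" "1 \<le> ?f v" "r - 1 \<le> ?f (v+1)"
      then show ?thesis using odd_viol[OF \<open>odd v\<close> assms, of ?f] by auto
    next
      fix v n1 assume h: "even v" "k \<le> v" "n1 \<le> r-1" "r - n1 \<le> ?f v" "n1 \<le> ?f (v+2)"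
      then have "\<not> condv r v ?f" using even_viol[OF \<open>even v\<close> assms, of ?f] by auto
      then show ?thesis using h(2) by auto
    next
      fix v n2 assume h: "even v" "k \<le> v" "n2 \<le> r-2" "r - n2 - 1 \<le> ?f v" "1 \<le> ?f (v+1)" "n2 \<le> ?f (v+2)"
      then have "\<not> condv r v ?f" using even_viol[OF \<open>even v\<close> assms, of ?f] by auto
      then show ?thesis using h(2) by auto
    qed
  next
    assume "\<exists>v\<ge>k. \<not> condv r v ?f"
    then obtain v where v: "v \<ge> k" "\<not> condv r v ?f" by blast
    show "(\<exists>v. odd v \<and> k \<le> v \<and> 2 \<le> ?f v)
   \<or> (\<exists>v. odd v \<and> k \<le> v \<and> 1 \<le> ?f v \<and> r - 1 \<le> ?f (v+1))
   \<or> (\<exists>v n1. even v \<and> k \<le> v \<and> n1 \<le> r-1 \<and> r - n1 \<le> ?f v \<and> n1 \<le> ?f (v+2))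
   \<or> (\<exists>v n2. even v \<and> k \<le> v \<and> n2 \<le> r-2 \<and> r - n2 - 1 \<le> ?f v \<and> 1 \<le> ?f (v+1) \<and> n2 \<le> ?f (v+2))"
    proof (cases "odd v")
      case True
      then have "2 \<le> ?f v \<or> (1 \<le> ?f v \<and> r - 1 \<le> ?f (v+1))" using odd_viol[OF True assms, of ?f] v by simp
      then show ?thesis using True v(1) by auto
    next
      case False
      then have "even v" by simp
      then have "(\<exists>n1. n1 \<le> r-1 \<and> r - n1 \<le> ?f v \<and> n1 \<le> ?f (v+2))
       \<or> (\<exists>n2. n2 \<le> r-2 \<and> r - n2 - 1 \<le> ?f v \<and> 1 \<le> ?f (v+1) \<and> n2 \<le> ?f (v+2))"
        using even_viol[OF _ assms, of v ?f] v by simp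
      then show ?thesis using \<open>even v\<close> v(1) by blast
    qed
  qed
  finally show ?thesis .
qed

lemma PL_split: "PL r k f \<longleftrightarrow> condv r k f \<and> PL r (k+1) f"
  unfolding PL_def
proof (intro iffI conjI allI impI)
  fix v assume "\<forall>v\<ge>k. condv r v f" "k + 1 \<le> v" then show "condv r v f" by simp
next
  fix v assume h: "condv r k f \<and> (\<forall>v\<ge>k + 1. condv r v f)" "k \<le> v"
  show "condv r v f"
  proof (cases "v = k")
    case True then show ?thesis using h by simp
  next
    case False then have "k + 1 \<le> v" using h(2) by simp
    then show ?thesis using h by simp
  qed
qed (simp)

lemma aux_prop1: "(T1 \<or> T2 \<longleftrightarrow> \<not>C) \<Longrightarrow> (G \<longleftrightarrow> \<not>P) \<Longrightarrow> (Lq \<longleftrightarrow> \<not>Lt) \<Longrightarrow> (Lq \<or> T1 \<or> T2 \<or> G \<longleftrightarrow> \<not>(Lt \<and> C \<and> P))"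
  by blast

lemma aux_prop2: "Lq \<Longrightarrow> \<not>Lt \<Longrightarrow> (Lq \<or> X \<longleftrightarrow> \<not>(Lt \<and> Y))"
  by blast

lemma Lgens_even_char:
  assumes "r \<ge> 2" "even k" "1 \<le> l" "l \<le> r"
  shows "(\<exists>g\<in>Lgens_even r l k. dvdm g m) \<longleftrightarrow> \<not> (Poly_Mapping.lookup m k < l \<and> PL r k (Poly_Mapping.lookup m))"
proof -
  let ?f = "Poly_Mapping.lookup m"
  have "(\<exists>g\<in>Lgens_even r l k. dvdm g m) \<longleftrightarrow>
     l \<le> ?f k
   \<or> (\<exists>t. 1 \<le> t \<and> t \<le> l - 1 \<and> l - t \<le> ?f k \<and> r - l + t \<le> ?f (k+2))
   \<or> (\<exists>t. 1 \<le> t \<and> t \<le> l - 1 \<and> l - t \<le> ?f k \<and> 1 \<le> ?f (k+1) \<and> r - l + t - 1 \<le> ?f (k+2))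
   \<or> (\<exists>g\<in>Lgens r (k+1). dvdm g m)"
  proof -
    have e2: "(\<exists>g\<in>{xp k (l-t) + xp (k+2) (r-l+t) | t. 1 \<le> t \<and> t \<le> l-1}. dvdm g m) \<longleftrightarrow> (\<exists>t. 1 \<le> t \<and> t \<le> l-1 \<and> dvdm (xp k (l-t) + xp (k+2) (r-l+t)) m)"
      by blast
    have e3: "(\<exists>g\<in>{xp k (l-t) + xp (k+1) 1 + xp (k+2) (r-l+t-1) | t. 1 \<le> t \<and> t \<le> l-1}. dvdm g m) \<longleftrightarrow> (\<exists>t. 1 \<le> t \<and> t \<le> l-1 \<and> dvdm (xp k (l-t) + xp (k+1) 1 + xp (k+2) (r-l+t-1)) m)"
      by blast
    show ?thesis unfolding Lgens_even_def bex_Un e2 e3 by (simp add: dvdm1 dvdm2 dvdm3 conj_ac)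
  qed
  also have "\<dots> \<longleftrightarrow> \<not> (?f k < l \<and> PL r k ?f)"
  proof -
    have c: "?f k < l \<Longrightarrow> (\<not> condv r k ?f \<longleftrightarrow>
       (\<exists>t. 1 \<le> t \<and> t \<le> l - 1 \<and> l - t \<le> ?f k \<and> r - l + t \<le> ?f (k+2))
     \<or> (\<exists>t. 1 \<le> t \<and> t \<le> l - 1 \<and> l - t \<le> ?f k \<and> 1 \<le> ?f (k+1) \<and> r - l + t - 1 \<le> ?f (k+2)))"
    proof -
      assume lt: "?f k < l"
      show ?thesis
      proof
        assume "\<not> condv r k ?f"
        then have "(1 \<le> ?f k \<and> r \<le> ?f k + ?f (k+2)) \<or> (1 \<le> ?f k \<and> 1 \<le> ?f (k+1) \<and> r \<le> ?f k + ?f (k+2) + 1)"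
          using assms unfolding condv_def by auto
        then show "(\<exists>t. 1 \<le> t \<and> t \<le> l - 1 \<and> l - t \<le> ?f k \<and> r - l + t \<le> ?f (k+2))
     \<or> (\<exists>t. 1 \<le> t \<and> t \<le> l - 1 \<and> l - t \<le> ?f k \<and> 1 \<le> ?f (k+1) \<and> r - l + t - 1 \<le> ?f (k+2))"
        proof
          assume h: "1 \<le> ?f k \<and> r \<le> ?f k + ?f (k+2)"
          show ?thesis by (rule disjI1, rule exI[of _ "l - ?f k"]) (use h lt assms in auto)
        next
          assume h: "1 \<le> ?f k \<and> 1 \<le> ?f (k+1) \<and> r \<le> ?f k + ?f (k+2) + 1"
          show ?thesis by (rule disjI2, rule exI[of _ "l - ?f k"]) (use h lt assms in auto)
        qed
      next
        assume "(\<exists>t. 1 \<le> t \<and> t \<le> l - 1 \<and> l - t \<le> ?f k \<and> r - l + t \<le> ?f (k+2))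
     \<or> (\<exists>t. 1 \<le> t \<and> t \<le> l - 1 \<and> l - t \<le> ?f k \<and> 1 \<le> ?f (k+1) \<and> r - l + t - 1 \<le> ?f (k+2))"
        then show "\<not> condv r k ?f" using assms unfolding condv_def by auto
      qed
    qed
    have L: "(\<exists>g\<in>Lgens r (k+1). dvdm g m) \<longleftrightarrow> \<not> PL r (k+1) ?f"
      unfolding Lgens_char[OF assms(1)] PL_def by blast
    show ?thesis
    proof (cases "?f k < l")
      case True
      show ?thesis unfolding PL_split[of r k ?f] by (rule aux_prop1[OF c[OF True, symmetric] L]) (simp add: not_less)
    next
      case False then show ?thesis by (intro aux_prop2) (simp_all add: not_less)
    qed
  qed
  finally show ?thesis .
qed

lemma Lgens_l_char:
  assumes "r \<ge> 2" "odd k" "1 \<le> l" "l \<le> r"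
  shows "(\<exists>g\<in>Lgens_l r l k. dvdm g m) \<longleftrightarrow> \<not> stdO r l k (Poly_Mapping.lookup m)"
proof -
  have e: "even (k+1)" using assms by simp
  have "(\<exists>g\<in>Lgens_l r l k. dvdm g m) \<longleftrightarrow> 2 \<le> Poly_Mapping.lookup m k
     \<or> (1 \<le> Poly_Mapping.lookup m k \<and> l - 1 \<le> Poly_Mapping.lookup m (k+1))
     \<or> (\<exists>g\<in>Lgens_even r l (k+1). dvdm g m)"
    unfolding Lgens_l_def using assms by (simp add: dvdm1 dvdm2)
  moreover have "(2 \<le> Poly_Mapping.lookup m k \<or> (1 \<le> Poly_Mapping.lookup m k \<and> l - 1 \<le> Poly_Mapping.lookup m (k+1)) \<or> \<not> (Poly_Mapping.lookup m (k+1) < l \<and> PL r (k+1) (Poly_Mapping.lookup m)))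
     \<longleftrightarrow> \<not> stdO r l k (Poly_Mapping.lookup m)"
    unfolding stdO_def using assms(3) by linarith
  ultimately show ?thesis unfolding Lgens_even_char[OF assms(1) e assms(3,4)] by simp
qed




definition wt :: "(nat \<Rightarrow> nat) \<Rightarrow> nat" where
  "wt f = (\<Sum>i\<in>{i. f i \<noteq> 0}. i * f i)"

definition Fs :: "nat \<Rightarrow> nat \<Rightarrow> (nat \<Rightarrow> nat) set" where
  "Fs k n = {f. finite {i. f i \<noteq> 0} \<and> (\<forall>i. f i \<noteq> 0 \<longrightarrow> k \<le> i) \<and> wt f = n}"

definition Tset :: "nat \<Rightarrow> nat \<Rightarrow> nat \<Rightarrow> nat \<Rightarrow> (nat \<Rightarrow> nat) set" where
  "Tset r l k n = {f \<in> Fs k n. stdO r l k f}"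

definition cnt :: "nat \<Rightarrow> nat \<Rightarrow> nat \<Rightarrow> nat \<Rightarrow> nat" where
  "cnt r l k n = card (Tset r l k n)"

lemma weight_wt: "weight m = wt (Poly_Mapping.lookup m)"
  unfolding weight_def wt_def by (simp add: keys.rep_eq)

lemma img_eq:
  "{f \<in> Fs k n. P f} = Poly_Mapping.lookup ` {m. (\<forall>v\<in>Poly_Mapping.keys m. k \<le> v) \<and> weight m = n \<and> P (Poly_Mapping.lookup m)}"
proof (rule set_eqI, rule iffI)
  fix f assume f: "f \<in> {f \<in> Fs k n. P f}"
  then have fin: "finite {i. f i \<noteq> 0}" by (simp add: Fs_def)
  let ?m = "Abs_poly_mapping f"
  have l: "Poly_Mapping.lookup ?m = f" using fin by (rule lookup_Abs_poly_mapping)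
  have kk: "Poly_Mapping.keys ?m = {i. f i \<noteq> 0}" unfolding keys.rep_eq l ..
  have ww: "weight ?m = wt f" unfolding weight_wt l ..
  have "?m \<in> {m. (\<forall>v\<in>Poly_Mapping.keys m. k \<le> v) \<and> weight m = n \<and> P (Poly_Mapping.lookup m)}"
    using f unfolding mem_Collect_eq kk ww l Fs_def by blast
  then show "f \<in> Poly_Mapping.lookup ` {m. (\<forall>v\<in>Poly_Mapping.keys m. k \<le> v) \<and> weight m = n \<and> P (Poly_Mapping.lookup m)}"
    by (rule image_eqI[where f="Poly_Mapping.lookup", OF l[symmetric]])
next
  fix f assume "f \<in> Poly_Mapping.lookup ` {m. (\<forall>v\<in>Poly_Mapping.keys m. k \<le> v) \<and> weight m = n \<and> P (Poly_Mapping.lookup m)}"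
  then obtain m where m: "f = Poly_Mapping.lookup m" "\<forall>v\<in>Poly_Mapping.keys m. k \<le> v" "weight m = n" "P (Poly_Mapping.lookup m)"
    by blast
  have kk: "Poly_Mapping.keys m = {i. f i \<noteq> 0}" unfolding keys.rep_eq m(1) ..
  have ww: "weight m = wt f" unfolding weight_wt m(1) ..
  have fin: "finite {i. f i \<noteq> 0}" unfolding kk[symmetric] by simp
  show "f \<in> {f \<in> Fs k n. P f}"
    using m(2-4) fin unfolding Fs_def mem_Collect_eq kk ww m(1)[symmetric] by blast
qed

lemma card_transfer:
  "card {m. (\<forall>v\<in>Poly_Mapping.keys m. k \<le> v) \<and> weight m = n \<and> P (Poly_Mapping.lookup m)} = card {f \<in> Fs k n. P f}"
proof -
  have "inj_on Poly_Mapping.lookup {m. (\<forall>v\<in>Poly_Mapping.keys m. k \<le> v) \<and> weight m = n \<and> P (Poly_Mapping.lookup m)}"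
  proof (rule inj_onI)
    fix x y assume "Poly_Mapping.lookup x = Poly_Mapping.lookup y"
    then show "x = y" by (intro poly_mapping_eqI) simp
  qed
  then show ?thesis unfolding img_eq by (simp add: card_image)
qed

lemma finite_Fs: "k \<ge> 1 \<Longrightarrow> finite (Fs k n)"
proof -
  assume k: "k \<ge> 1"
  have "Fs k n = {f \<in> Fs k n. True}" by simp
  also have "\<dots> = Poly_Mapping.lookup ` {m. (\<forall>v\<in>Poly_Mapping.keys m. k \<le> v) \<and> weight m = n \<and> True}"
    by (rule img_eq)
  finally show ?thesis using finite_wt[OF k, of n] by simp
qed

lemma HP_cnt:
  assumes "r \<ge> 2" "odd k" "1 \<le> l" "l \<le> r"
  shows "(HP r k l :: 'a::field fps) = Abs_fps (\<lambda>n. of_nat (cnt r l k n))"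
proof -
  have k: "k \<ge> 1" using assms(2) by (cases k) auto
  have "stdset k (Lgens_l r l k) n = {m. (\<forall>v\<in>Poly_Mapping.keys m. k \<le> v) \<and> weight m = n \<and> stdO r l k (Poly_Mapping.lookup m)}" for n
    unfolding stdset_def Lgens_l_char[OF assms] by simp
  then have "card (stdset k (Lgens_l r l k) n) = cnt r l k n" for n
    unfolding cnt_def Tset_def card_transfer[of k n "stdO r l k", symmetric] by simp
  then show ?thesis
    unfolding HP_def quot_dim_std[OF k] by simp
qed




lemma wt_sup:
  assumes "finite A" "{i. f i \<noteq> 0} \<subseteq> A"
  shows "wt f = (\<Sum>i\<in>A. i * f i)"
  unfolding wt_def by (rule sum.mono_neutral_left) (use assms in auto)

lemma wt_upd:
  assumes fin: "finite {i. f i \<noteq> 0}"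
  shows "wt f = wt (f(j:=0)) + j * f j"
proof -
  let ?A = "insert j {i. f i \<noteq> 0}"
  have fA: "finite ?A" using fin by simp
  have "wt f = (\<Sum>i\<in>?A. i * f i)" by (rule wt_sup[OF fA]) auto
  also have "\<dots> = j * f j + (\<Sum>i\<in>?A - {j}. i * f i)" by (rule sum.remove[OF fA]) simp
  also have "(\<Sum>i\<in>?A - {j}. i * f i) = (\<Sum>i\<in>?A - {j}. i * (f(j:=0)) i)"
    by (rule sum.cong) auto
  also have "\<dots> = (\<Sum>i\<in>?A. i * (f(j:=0)) i)"
    using sum.remove[OF fA, of j "\<lambda>i. i * (f(j:=0)) i"] by simp
  also have "\<dots> = wt (f(j:=0))" by (rule wt_sup[OF fA, symmetric]) auto
  finally show ?thesis by simp
qed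

lemma stdO_local:
  assumes "\<forall>i\<ge>k. f i = g i"
  shows "stdO r l k f = stdO r l k g"
proof -
  have "condv r v f = condv r v g" if "v \<ge> k" for v
    using assms that unfolding condv_def by simp
  then have "PL r (k+1) f = PL r (k+1) g" unfolding PL_def by simp
  then show ?thesis unfolding stdO_def using assms by simp
qed

lemma stdO_rec:
  assumes "r \<ge> 2" "odd k" "f (k+1) < l" "l \<le> r"
  shows "stdO r l k f \<longleftrightarrow> f k \<le> 1 \<and> (1 \<le> f k \<longrightarrow> f (k+1) + 2 \<le> l) \<and> stdO r (r - f (k+1)) (k+2) f"
proof -
  have e1: "even (k+1)" "odd (k+2)" "even (k+3)" using assms(2) by simp_all
  have eqs: "k+1+1 = k+2" "k+2+1 = k+3" "k+1+2 = k+3" by simp_all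
  have P1: "PL r (k+1) f \<longleftrightarrow> condv r (k+1) f \<and> condv r (k+2) f \<and> PL r (k+3) f"
  proof -
    have eqs: "k+1+1 = k+2" "k+2+1 = k+3" by simp_all
    note a = PL_split[of r "k+1" f, unfolded eqs]
    note b = PL_split[of r "k+2" f, unfolded eqs]
    show ?thesis unfolding a b ..
  qed
  have c3: "PL r (k+3) f \<Longrightarrow> f (k+3) < r"
  proof -
    assume "PL r (k+3) f"
    then have "condv r (k+3) f" unfolding PL_def by simp
    then show ?thesis using assms(1) e1(3) unfolding condv_def by (cases "f (k+3)") auto
  qed
  have s2: "stdO r (r - f (k+1)) (k+2) f \<longleftrightarrow> f (k+2) \<le> 1 \<and> (1 \<le> f (k+2) \<longrightarrow> f (k+3) + 2 \<le> r - f (k+1))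
      \<and> f (k+3) < r - f (k+1) \<and> PL r (k+3) f"
    unfolding stdO_def eqs ..
  have cv1: "condv r (k+1) f \<longleftrightarrow> (1 \<le> f (k+1) \<longrightarrow> f (k+1) + f (k+3) < r) \<and> (1 \<le> f (k+1) \<and> 1 \<le> f (k+2) \<longrightarrow> f (k+1) + f (k+3) + 1 < r)"
    using e1 unfolding condv_def eqs by simp
  have cv2: "condv r (k+2) f \<longleftrightarrow> f (k+2) \<le> 1 \<and> (1 \<le> f (k+2) \<longrightarrow> f (k+3) + 2 \<le> r)"
    using e1 unfolding condv_def eqs by simp
  show ?thesis
    unfolding s2 stdO_def[of r l k f] P1 cv1 cv2 using assms(1,3,4) c3 by auto
qed




lemma wt2:
  assumes fin: "finite {i. f i \<noteq> 0}"
  shows "wt f = wt (f(k:=0, k+1:=0)) + k * f k + (k+1) * f (k+1)"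
proof -
  have fin2: "finite {i. (f(k+1:=0)) i \<noteq> 0}"
    by (rule finite_subset[OF _ fin]) auto
  have "wt f = wt (f(k+1:=0)) + (k+1) * f (k+1)" by (rule wt_upd[OF fin])
  also have "wt (f(k+1:=0)) = wt ((f(k+1:=0))(k:=0)) + k * (f(k+1:=0)) k" by (rule wt_upd[OF fin2])
  also have "(f(k+1:=0))(k:=0) = f(k:=0, k+1:=0)" by (rule ext) simp
  also have "(f(k+1:=0)) k = f k" by simp
  finally show ?thesis by linarith
qed

lemma fiber_sub:
  assumes r: "r \<ge> 2" and k: "odd k" and b: "b < l" and l: "l \<le> r"
    and f: "f \<in> Tset r l k n" "f k = a" "f (k+1) = b"
  shows "(a = 1 \<longrightarrow> b+2 \<le> l) \<and> a \<le> 1 \<and> k*a + (k+1)*b \<le> n \<and> f = (f(k:=0, k+1:=0))(k:=a, k+1:=b)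
     \<and> f(k:=0, k+1:=0) \<in> Tset r (r-b) (k+2) (n - (k*a + (k+1)*b))"
proof -
  let ?g = "f(k:=0, k+1:=0)"
  have F: "finite {i. f i \<noteq> 0}" "\<forall>i. f i \<noteq> 0 \<longrightarrow> k \<le> i" "wt f = n" "stdO r l k f"
    using f(1) unfolding Tset_def Fs_def by auto
  have S: "a \<le> 1 \<and> (1 \<le> a \<longrightarrow> b + 2 \<le> l) \<and> stdO r (r - b) (k+2) f"
    using stdO_rec[OF r k _ l, of f] F(4) f(2,3) b by simp
  have W: "wt f = wt ?g + k * a + (k+1) * b" using wt2[OF F(1), of k] f(2,3) by simp
  have gfin: "finite {i. ?g i \<noteq> 0}" by (rule finite_subset[OF _ F(1)]) auto
  have gsupp: "\<forall>i. ?g i \<noteq> 0 \<longrightarrow> k+2 \<le> i"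
  proof (intro allI impI)
    fix i assume "?g i \<noteq> 0"
    then have "i \<noteq> k" "i \<noteq> k+1" "f i \<noteq> 0" by (auto split: if_splits)
    then show "k+2 \<le> i" using F(2) by fastforce
  qed
  have gstd: "stdO r (r-b) (k+2) ?g" using S stdO_local[of "k+2" ?g f] by simp
  have "?g \<in> Tset r (r-b) (k+2) (n - (k*a + (k+1)*b))"
    unfolding Tset_def Fs_def using gfin gsupp gstd W F(3) by simp
  moreover have "f = (f(k:=0, k+1:=0))(k:=a, k+1:=b)" using f(2,3) by (intro ext) simp
  ultimately show ?thesis using S W F(3) by auto
qed

lemma fiber_sup:
  assumes r: "r \<ge> 2" and k: "odd k" and b: "b < l" and l: "l \<le> r" and a: "a \<le> 1"
    and v: "a = 1 \<longrightarrow> b+2 \<le> l" and w: "k*a + (k+1)*b \<le> n"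
    and g: "g \<in> Tset r (r-b) (k+2) (n - (k*a + (k+1)*b))"
  shows "g(k:=a, k+1:=b) \<in> Tset r l k n"
proof -
  let ?f = "g(k:=a, k+1:=b)"
  have G: "finite {i. g i \<noteq> 0}" "\<forall>i. g i \<noteq> 0 \<longrightarrow> k+2 \<le> i" "wt g = n - (k*a + (k+1)*b)" "stdO r (r-b) (k+2) g"
    using g unfolding Tset_def Fs_def by auto
  have g0: "g k = 0" "g (k+1) = 0" using G(2) by (auto dest: spec[of _ k] spec[of _ "k+1"])
  have ffin: "finite {i. ?f i \<noteq> 0}" by (rule finite_subset[of _ "insert k (insert (k+1) {i. g i \<noteq> 0})"]) (use G(1) in auto)
  have fsupp: "\<forall>i. ?f i \<noteq> 0 \<longrightarrow> k \<le> i" using G(2) by (auto dest: Suc_leD)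
  have bk: "(g(k:=a, k+1:=b))(k:=0, k+1:=0) = g" using g0 by (intro ext) simp
  have fk: "(g(k:=a, k+1:=b)) k = a" "(g(k:=a, k+1:=b)) (k+1) = b" by simp_all
  have W: "wt ?f = wt g + k * a + (k+1) * b" using wt2[OF ffin, of k] unfolding bk fk .
  have fstd: "stdO r l k ?f"
  proof -
    have "stdO r (r-b) (k+2) ?f" using G(4) stdO_local[of "k+2" ?f g] by simp
    then show ?thesis using stdO_rec[OF r k _ l, of ?f] b a v by auto
  qed
  show ?thesis unfolding Tset_def Fs_def using ffin fsupp W G(3) w fstd by simp
qed

lemma fiber_card:
  assumes r: "r \<ge> 2" and k: "odd k" and b: "b < l" and l: "l \<le> r" and a: "a \<le> 1"
  shows "card {f \<in> Tset r l k n. f k = a \<and> f (k+1) = b} =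
    (if (a = 1 \<longrightarrow> b+2 \<le> l) \<and> k*a + (k+1)*b \<le> n then cnt r (r-b) (k+2) (n - (k*a + (k+1)*b)) else 0)"
proof (cases "(a = 1 \<longrightarrow> b+2 \<le> l) \<and> k*a + (k+1)*b \<le> n")
  case True
  let ?T = "Tset r (r-b) (k+2) (n - (k*a + (k+1)*b))"
  let ?phi = "\<lambda>g. g(k:=a, k+1:=b)"
  have eq: "{f \<in> Tset r l k n. f k = a \<and> f (k+1) = b} = ?phi ` ?T"
  proof (rule set_eqI, rule iffI)
    fix f assume "f \<in> {f \<in> Tset r l k n. f k = a \<and> f (k+1) = b}"
    then have "f \<in> Tset r l k n" "f k = a" "f (k+1) = b" by auto
    note fs = fiber_sub[OF r k b l this]
    have f1: "f = ?phi (f(k:=0, k+1:=0))" using fs by (elim conjE)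
    have f2: "f(k:=0, k+1:=0) \<in> ?T" using fs by (elim conjE)
    show "f \<in> ?phi ` ?T" by (rule image_eqI[where f="?phi", OF f1 f2])
  next
    fix f assume "f \<in> ?phi ` ?T"
    then obtain g where g: "g \<in> ?T" "f = ?phi g" by blast
    have v: "a = 1 \<longrightarrow> b+2 \<le> l" and w: "k*a + (k+1)*b \<le> n" using True by simp_all
    have "?phi g \<in> Tset r l k n" by (rule fiber_sup[OF r k b l a v w g(1)])
    then show "f \<in> {f \<in> Tset r l k n. f k = a \<and> f (k+1) = b}" using g(2) by simp
  qed
  have inj: "inj_on ?phi ?T"
  proof (rule inj_onI)
    fix g h assume gh: "g \<in> ?T" "h \<in> ?T" "?phi g = ?phi h"
    have "\<forall>i. g i \<noteq> 0 \<longrightarrow> k+2 \<le> i" "\<forall>i. h i \<noteq> 0 \<longrightarrow> k+2 \<le> i"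
      using gh(1,2) unfolding Tset_def Fs_def by auto
    then have z: "g k = 0" "g (k+1) = 0" "h k = 0" "h (k+1) = 0"
      by (auto dest: spec[of _ k] spec[of _ "k+1"])
    show "g = h"
    proof (rule ext)
      fix i
      show "g i = h i"
      proof (cases "i = k \<or> i = k+1")
        case True then show ?thesis using z by auto
      next
        case False then show ?thesis using fun_cong[OF gh(3), of i] by auto
      qed
    qed
  qed
  show ?thesis using True unfolding eq card_image[OF inj] cnt_def by simp
next
  case False
  have "{f \<in> Tset r l k n. f k = a \<and> f (k+1) = b} = {}"
  proof (rule ccontr)
    assume "{f \<in> Tset r l k n. f k = a \<and> f (k+1) = b} \<noteq> {}"
    then obtain f where "f \<in> Tset r l k n" "f k = a" "f (k+1) = b" by blast
    note fs = fiber_sub[OF r k b l this]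
    have v: "a = 1 \<longrightarrow> b+2 \<le> l" using fs by (elim conjE)
    have w: "k*a + (k+1)*b \<le> n" using fs by (elim conjE)
    show False using False v w by simp
  qed
  then have "card {f \<in> Tset r l k n. f k = a \<and> f (k+1) = b} = 0" by (simp only: card.empty)
  then show ?thesis unfolding if_not_P[OF False] .
qed




lemma finite_Tset: "odd k \<Longrightarrow> finite (Tset r l k n)"
proof -
  assume "odd k"
  then have "k \<ge> 1" by (cases k) auto
  then have "finite (Fs k n)" by (rule finite_Fs)
  then show ?thesis unfolding Tset_def by simp
qed

lemma cnt_rec:
  assumes r: "r \<ge> 2" and k: "odd k" and l1: "1 \<le> l" and lr: "l \<le> r"
  shows "cnt r l k n = (\<Sum>b<l. (if (k+1)*b \<le> n then cnt r (r-b) (k+2) (n - (k+1)*b) else 0)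
      + (if b+2 \<le> l \<and> k + (k+1)*b \<le> n then cnt r (r-b) (k+2) (n - (k + (k+1)*b)) else 0))"
proof -
  let ?T = "Tset r l k n"
  define A where "A a b = {f \<in> ?T. f k = a \<and> f (k+1) = b}" for a b
  have fT: "finite ?T" using k by (rule finite_Tset)
  have fA: "finite (A a b)" for a b unfolding A_def using fT by simp
  have decomp: "?T = (\<Union>b\<in>{..<l}. A 0 b \<union> A 1 b)"
  proof (rule set_eqI, rule iffI)
    fix f assume f: "f \<in> ?T"
    then have "stdO r l k f" unfolding Tset_def by simp
    then have "f k \<le> 1" "f (k+1) < l" unfolding stdO_def by auto
    then have "f k = 0 \<or> f k = 1" by auto
    then show "f \<in> (\<Union>b\<in>{..<l}. A 0 b \<union> A 1 b)" using f \<open>f (k+1) < l\<close> unfolding A_def by auto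
  next
    fix f assume "f \<in> (\<Union>b\<in>{..<l}. A 0 b \<union> A 1 b)"
    then show "f \<in> ?T" unfolding A_def by auto
  qed
  have "cnt r l k n = card (\<Union>b\<in>{..<l}. A 0 b \<union> A 1 b)" unfolding cnt_def decomp[symmetric] ..
  also have "\<dots> = (\<Sum>b<l. card (A 0 b \<union> A 1 b))"
    apply (rule card_UN_disjoint)
      apply simp
    using fA apply simp
    apply (auto simp: A_def)
    done
  also have "\<dots> = (\<Sum>b<l. card (A 0 b) + card (A 1 b))"
    apply (rule sum.cong[OF refl], rule card_Un_disjoint)
    using fA apply simp
    using fA apply simp
    apply (auto simp: A_def)
    done
  also have "\<dots> = (\<Sum>b<l. (if (k+1)*b \<le> n then cnt r (r-b) (k+2) (n - (k+1)*b) else 0)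
      + (if b+2 \<le> l \<and> k + (k+1)*b \<le> n then cnt r (r-b) (k+2) (n - (k + (k+1)*b)) else 0))"
  proof (rule sum.cong[OF refl])
    fix b assume "b \<in> {..<l}"
    then have b: "b < l" by simp
    have c0: "card (A 0 b) = (if (k+1)*b \<le> n then cnt r (r-b) (k+2) (n - (k+1)*b) else 0)"
      unfolding A_def using fiber_card[OF r k b lr, of 0 n] by simp
    have c1: "card (A 1 b) = (if b+2 \<le> l \<and> k + (k+1)*b \<le> n then cnt r (r-b) (k+2) (n - (k + (k+1)*b)) else 0)"
      unfolding A_def using fiber_card[OF r k b lr, of 1 n] by simp
    show "card (A 0 b) + card (A 1 b) = (if (k+1)*b \<le> n then cnt r (r-b) (k+2) (n - (k+1)*b) else 0)
      + (if b+2 \<le> l \<and> k + (k+1)*b \<le> n then cnt r (r-b) (k+2) (n - (k + (k+1)*b)) else 0)"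
      unfolding c0 c1 ..
  qed
  finally show ?thesis .
qed

definition Mc :: "nat \<Rightarrow> nat \<Rightarrow> nat \<Rightarrow> 'a::field fps" where
  "Mc l e j = (if j \<le> l then fps_X ^ (e*(j-1)) else 0) + (if j+1 \<le> l then fps_X ^ (e*j-1) else 0)"

lemma if_X_mult_nth:
  "fps_nth ((if P then fps_X ^ p else 0) * (F :: 'a::field fps)) n = (if P \<and> p \<le> n then fps_nth F (n - p) else 0)"
  by (simp add: fps_X_power_mult_nth not_less)

lemma K:
  assumes r: "r \<ge> 2" and k: "odd k" and l1: "1 \<le> l" and lr: "l \<le> r"
  shows "(HP r k l :: 'a::field fps) = (\<Sum>j=1..r. Mc l (k+1) j * HP r (k+2) (r-j+1))"
proof -
  have k2: "odd (k+2)" using k by simp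
  define c where "c j m = (of_nat (cnt r (r-j+1) (k+2) m) :: 'a)" for j m
  have H: "HP r (k+2) (r-j+1) = Abs_fps (c j)" if "j \<in> {1..r}" for j
  proof -
    have "1 \<le> r-j+1" "r-j+1 \<le> r" using that by auto
    then show ?thesis unfolding c_def by (rule HP_cnt[OF r k2])
  qed
  define g where "g j n = (if j \<le> l \<and> (k+1)*(j-1) \<le> n then c j (n - (k+1)*(j-1)) else 0)
     + (if j+1 \<le> l \<and> (k+1)*j - 1 \<le> n then c j (n - ((k+1)*j-1)) else 0)" for j n
  have coef: "fps_nth (Mc l (k+1) j * Abs_fps (c j)) n = g j n" for j n
    unfolding Mc_def distrib_right fps_add_nth if_X_mult_nth g_def by simp
  show ?thesis
  proof (rule fps_ext)
    fix n
    have "fps_nth (\<Sum>j=1..r. Mc l (k+1) j * HP r (k+2) (r-j+1) :: 'a fps) n = (\<Sum>j=1..r. fps_nth (Mc l (k+1) j * HP r (k+2) (r-j+1)) n)"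
      by (rule fps_sum_nth)
    also have "\<dots> = (\<Sum>j=1..r. g j n)"
    proof (rule sum.cong[OF refl])
      fix j assume "j \<in> {1..r}"
      show "fps_nth (Mc l (k+1) j * HP r (k+2) (r-j+1)) n = g j n" unfolding H[OF \<open>j \<in> {1..r}\<close>] coef ..
    qed
    also have "\<dots> = (\<Sum>j=1..l. g j n)"
      by (rule sum.mono_neutral_right) (use lr in \<open>auto simp: g_def\<close>)
    also have "\<dots> = (\<Sum>b<l. g (Suc b) n)"
      using sum.atLeast1_atMost_eq[of "\<lambda>j. g j n" l] by simp
    also have "\<dots> = (\<Sum>b<l. of_nat ((if (k+1)*b \<le> n then cnt r (r-b) (k+2) (n - (k+1)*b) else 0)
      + (if b+2 \<le> l \<and> k + (k+1)*b \<le> n then cnt r (r-b) (k+2) (n - (k + (k+1)*b)) else 0)))"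
    proof (rule sum.cong[OF refl])
      fix b assume "b \<in> {..<l}"
      then have b: "b < l" by simp
      have e1: "(k+1) * (Suc b) - 1 = k + (k+1)*b" by simp
      have e2: "r - Suc b + 1 = r - b" using b lr by simp
      show "g (Suc b) n = of_nat ((if (k+1)*b \<le> n then cnt r (r-b) (k+2) (n - (k+1)*b) else 0)
      + (if b+2 \<le> l \<and> k + (k+1)*b \<le> n then cnt r (r-b) (k+2) (n - (k + (k+1)*b)) else 0))"
        unfolding g_def c_def e1 e2 using b by simp
    qed
    also have "\<dots> = of_nat (cnt r l k n)"
      unfolding cnt_rec[OF r k l1 lr, of n] by (rule of_nat_sum[symmetric])
    also have "\<dots> = fps_nth (HP r k l :: 'a fps) n" unfolding HP_cnt[OF r k l1 lr] by simp
    finally show "fps_nth (HP r k l :: 'a fps) n = fps_nth (\<Sum>j=1..r. Mc l (k+1) j * HP r (k+2) (r-j+1) :: 'a fps) n" by (rule sym)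
  qed
qed




lemma N_base:
  "Ncoef r J i (J+1) j = (if 1 \<le> j \<and> j \<le> i - 1 then fps_X ^ (2*(J+1)*j - 1) + fps_X ^ (2*(J+1)*(j-1))
        else if j = i then fps_X ^ (2*(J+1)*(j-1)) else 0)"
  by (subst Ncoef.simps) simp

lemma N_step:
  assumes "d \<ge> J+1"
  shows "Ncoef r J i (Suc d) j = fps_X ^ (2*(Suc d)*(j-1)) * (\<Sum>m=1..r-j+1. Ncoef r J i d m)
       + fps_X ^ (2*(Suc d)*j - 1) * (\<Sum>m=1..r-j. Ncoef r J i d m)"
  using assms by (subst Ncoef.simps) simp

lemma swap_sums:
  fixes a :: "nat \<Rightarrow> 'a::comm_ring_1" and b :: "nat \<Rightarrow> nat \<Rightarrow> 'a"
  shows "(\<Sum>m\<in>A. a m * (\<Sum>j\<in>B. b m j * c j)) = (\<Sum>j\<in>B. (\<Sum>m\<in>A. a m * b m j) * c j)"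
proof -
  have "(\<Sum>m\<in>A. a m * (\<Sum>j\<in>B. b m j * c j)) = (\<Sum>m\<in>A. \<Sum>j\<in>B. a m * b m j * c j)"
    by (simp add: sum_distrib_left mult.assoc)
  also have "\<dots> = (\<Sum>j\<in>B. \<Sum>m\<in>A. a m * b m j * c j)" by (rule sum.swap)
  also have "\<dots> = (\<Sum>j\<in>B. (\<Sum>m\<in>A. a m * b m j) * c j)" by (simp add: sum_distrib_right)
  finally show ?thesis .
qed

lemma sum_filter_le:
  fixes f :: "nat \<Rightarrow> 'a::comm_monoid_add"
  assumes "s \<le> r"
  shows "(\<Sum>m=1..r. if m \<le> s then f m else 0) = (\<Sum>m=1..s. f m)"
proof -
  have "(\<Sum>m=1..r. if m \<le> s then f m else 0) = (\<Sum>m\<in>{x \<in> {1..r}. x \<le> s}. f m)"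
    by (rule sum.inter_filter[symmetric]) simp
  also have "{x \<in> {1..r}. x \<le> s} = {1..s}" using assms by auto
  finally show ?thesis .
qed

lemma comb:
  fixes N :: "nat \<Rightarrow> 'a::field fps"
  assumes j: "1 \<le> j" "j \<le> r"
  shows "(\<Sum>m=1..r. N m * Mc (r-m+1) e j) = fps_X ^ (e*(j-1)) * (\<Sum>m=1..r-j+1. N m) + fps_X ^ (e*j-1) * (\<Sum>m=1..r-j. N m)"
proof -
  have "(\<Sum>m=1..r. N m * Mc (r-m+1) e j) = (\<Sum>m=1..r. (if m \<le> r-j+1 then fps_X ^ (e*(j-1)) * N m else 0)
        + (if m \<le> r-j then fps_X ^ (e*j-1) * N m else 0))"
  proof (rule sum.cong[OF refl])
    fix m assume m: "m \<in> {1..r}"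
    have c1: "(j \<le> r-m+1) = (m \<le> r-j+1)" using m j by auto
    have c2: "(j+1 \<le> r-m+1) = (m \<le> r-j)" using m j by auto
    show "N m * Mc (r-m+1) e j = (if m \<le> r-j+1 then fps_X ^ (e*(j-1)) * N m else 0)
        + (if m \<le> r-j then fps_X ^ (e*j-1) * N m else 0)"
      unfolding Mc_def c1 c2 by (simp add: distrib_left mult.commute)
  qed
  also have "\<dots> = (\<Sum>m=1..r. if m \<le> r-j+1 then fps_X ^ (e*(j-1)) * N m else 0)
        + (\<Sum>m=1..r. if m \<le> r-j then fps_X ^ (e*j-1) * N m else 0)"
    by (rule sum.distrib)
  also have "\<dots> = (\<Sum>m=1..r-j+1. fps_X ^ (e*(j-1)) * N m) + (\<Sum>m=1..r-j. fps_X ^ (e*j-1) * N m)"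
  proof -
    have a1: "r-j+1 \<le> r" "r-j \<le> r" using j by auto
    show ?thesis unfolding sum_filter_le[OF a1(1)] sum_filter_le[OF a1(2)] ..
  qed
  also have "\<dots> = fps_X ^ (e*(j-1)) * (\<Sum>m=1..r-j+1. N m) + fps_X ^ (e*j-1) * (\<Sum>m=1..r-j. N m)"
    unfolding sum_distrib_left ..
  finally show ?thesis .
qed

theorem lemma2p2:
  fixes r i J d :: nat
  assumes "r \<ge> 2" and "1 \<le> i" and "i \<le> r" and "d \<ge> J + 1"
  shows "(HP r (2*J+1) i :: 'a::field_char_0 fps)
           = (\<Sum>j=1..r. Ncoef r J i d j * HP r (2*d+1) (r-j+1))"
  using assms(4)
proof (induction d rule: dec_induct)
  case base
  have k: "odd (2*J+1)" by simp
  have "(HP r (2*J+1) i :: 'a fps) = (\<Sum>j=1..r. Mc i (2*J+1+1) j * HP r (2*J+1+2) (r-j+1))"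
    by (rule K[OF assms(1) k assms(2,3)])
  also have "\<dots> = (\<Sum>j=1..r. Ncoef r J i (J+1) j * HP r (2*(J+1)+1) (r-j+1))"
  proof (rule sum.cong[OF refl])
    fix j assume "j \<in> {1..r}"
    then have j: "1 \<le> j" by simp
    have e: "2*J+1+1 = 2*(J+1)" "2*J+1+2 = 2*(J+1)+1" by simp_all
    have eqM: "Mc i (2*(J+1)) j = (Ncoef r J i (J+1) j :: 'a fps)"
      unfolding N_base Mc_def using j assms(2)
      by (cases "j < i"; cases "j = i") (auto simp: add.commute)
    show "(Mc i (2*J+1+1) j :: 'a fps) * HP r (2*J+1+2) (r-j+1) = Ncoef r J i (J+1) j * HP r (2*(J+1)+1) (r-j+1)"
      unfolding e eqM ..
  qed
  finally show ?case .
next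
  case (step d)
  have k: "odd (2*d+1)" by simp
  have "(HP r (2*J+1) i :: 'a fps) = (\<Sum>m=1..r. Ncoef r J i d m * HP r (2*d+1) (r-m+1))"
    by (rule step.IH)
  also have "\<dots> = (\<Sum>m=1..r. Ncoef r J i d m * (\<Sum>j=1..r. Mc (r-m+1) (2*d+1+1) j * HP r (2*d+1+2) (r-j+1)))"
  proof (rule sum.cong[OF refl])
    fix m assume "m \<in> {1..r}"
    then have "1 \<le> r-m+1" "r-m+1 \<le> r" by auto
    then have h: "(HP r (2*d+1) (r-m+1) :: 'a fps) = (\<Sum>j=1..r. Mc (r-m+1) (2*d+1+1) j * HP r (2*d+1+2) (r-j+1))"
      by (rule K[OF assms(1) k])
    show "(Ncoef r J i d m :: 'a fps) * HP r (2*d+1) (r-m+1) = Ncoef r J i d m * (\<Sum>j=1..r. Mc (r-m+1) (2*d+1+1) j * HP r (2*d+1+2) (r-j+1))"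
      unfolding h ..
  qed
  also have "\<dots> = (\<Sum>j=1..r. (\<Sum>m=1..r. Ncoef r J i d m * Mc (r-m+1) (2*d+1+1) j) * HP r (2*d+1+2) (r-j+1))"
    by (rule swap_sums)
  also have "\<dots> = (\<Sum>j=1..r. Ncoef r J i (Suc d) j * HP r (2*Suc d+1) (r-j+1))"
  proof (rule sum.cong[OF refl])
    fix j assume "j \<in> {1..r}"
    then have j: "1 \<le> j" "j \<le> r" by auto
    have e: "2*d+1+1 = 2*Suc d" "2*d+1+2 = 2*Suc d+1" by simp_all
    show "(\<Sum>m=1..r. (Ncoef r J i d m :: 'a fps) * Mc (r-m+1) (2*d+1+1) j) * HP r (2*d+1+2) (r-j+1) = Ncoef r J i (Suc d) j * HP r (2*Suc d+1) (r-j+1)"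
      unfolding e comb[OF j] N_step[OF step.hyps(1)] ..
  qed
  finally show ?case .
qed



end
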